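(* In the setting of the SW-MOSS policy (see context) with $\eta>1/2$, for every arm $k\in\mathcal{K}$, every time $t\in\mathcal{T}$, every $x>0$ and every $l\ge 1$, the probability of the event $A=\{\hat\mu^k_{n_k(t)}+c_{n_k(t)}\le M_t^k-x,\ n_k(t)\ge l\}$ is at most \[\frac{(2\eta)^{3/2}}{\ln(2\eta)}\,\frac{K}{\tau x^2}\exp\!\big(-x^2 l/\eta\big),\] and the probability of the event $B=\{\hat\mu^k_{n_k(t)}-c_{n_k(t)}\ge M_t^k+x,\ n_k(t)\ge l\}$ is bounded by the same quantity.
   Context: Arms $\mathcal{K}=\{1,\dots,K\}$, times $\mathcal{T}=\{1,\dots,T\}$; rewards $X_t^k$ are independent with means $\mu_t^k$ and satisfy: for all $\lambda\in\mathbb{R}$, $\mathbb{E}[\exp(\lambda(X_t^k-\mu_t^k))]\le\exp(\lambda^2/8)$, and $\mu_t^k\in[a,a+b]$ for fixed $a\in\mathbb{R},b>0$. At time $t$ the chosen arm $\varphi_t$ depends only on past observations $\{(\varphi_s,X_s^{\varphi_s})\}_{s<t}$. SW-MOSS with budget $V_T>0$: $\tau=\lceil K^{1/3}(T/V_T)^{2/3}\rceil$, first select each arm once; then at each $t$, with window $\mathcal{W}_t=\{\max(1,t-\tau),\dots,t-1\}$, $n_k(t)=\sum_{s\in\mathcal{W}_t}\mathbf{1}\{\varphi_s=k\}$, $\hat\mu^k_{n_k(t)}=\frac{1}{n_k(t)}\sum_{s\in\mathcal{W}_t}X_s^{\varphi_s}\mathbf{1}\{\varphi_s=k\}$, $c_n=\sqrt{\eta\max(\ln(\tau/(Kn)),0)/n}$,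 select $\varphi_t=\arg\max_k\hat\mu^k_{n_k(t)}+c_{n_k(t)}$. Define $M_t^k=\frac{1}{n_k(t)}\sum_{s\in\mathcal{W}_t}\mu_s^k\mathbf{1}\{\varphi_s=k\}$. *)

theory Defs
  imports "HOL-Probability.Probability"
begin

text \<open>SW-MOSS policy, arms 1..K, times 1..T. Rewards are modelled as a reward table
  Xr s k (reward of arm k at time s); the policy only reads Xr s (phi s) for s < t.\<close>

definition swmoss_tau :: "nat \<Rightarrow> nat \<Rightarrow> real \<Rightarrow> nat" where
  "swmoss_tau K T V = nat \<lceil>real K powr (1/3) * (real T / V) powr (2/3)\<rceil>"

definition window :: "nat \<Rightarrow> nat \<Rightarrow> nat set" where
  "window \<tau> t = {max 1 (t - \<tau>)..<t}"

definition pulls :: "(nat \<Rightarrow> nat) \<Rightarrow> nat \<Rightarrow> nat \<Rightarrow> nat \<Rightarrow> nat" where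
  "pulls \<phi> \<tau> k t = card {s \<in> window \<tau> t. \<phi> s = k}"

definition emp_mean :: "(nat \<Rightarrow> nat) \<Rightarrow> (nat \<Rightarrow> nat \<Rightarrow> real) \<Rightarrow> nat \<Rightarrow> nat \<Rightarrow> nat \<Rightarrow> real" where
  "emp_mean \<phi> Xr \<tau> k t = (\<Sum>s\<in>{s \<in> window \<tau> t. \<phi> s = k}. Xr s k) / real (pulls \<phi> \<tau> k t)"

text \<open>M_t^k: window average of the means over the times arm k was pulled\<close>
definition win_mean :: "(nat \<Rightarrow> nat) \<Rightarrow> (nat \<Rightarrow> nat \<Rightarrow> real) \<Rightarrow> nat \<Rightarrow> nat \<Rightarrow> nat \<Rightarrow> real" where
  "win_mean \<phi> \<mu> \<tau> k t = (\<Sum>s\<in>{s \<in> window \<tau> t. \<phi> s = k}. \<mu> s k) / real (pulls \<phi> \<tau> k t)"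

definition conf :: "real \<Rightarrow> nat \<Rightarrow> nat \<Rightarrow> nat \<Rightarrow> real" where
  "conf \<eta> \<tau> K n = sqrt (\<eta> * max (ln (real \<tau> / (real K * real n))) 0 / real n)"

text \<open>Conventions: times t \<le> K pull arm t (each arm once); an arm with no pull in the window
  has index +infinity (smallest such arm chosen); ties in the argmax are broken by smallest index.\<close>
definition swmoss_choice :: "nat \<Rightarrow> nat \<Rightarrow> real \<Rightarrow> (nat \<Rightarrow> nat \<Rightarrow> real) \<Rightarrow> (nat \<Rightarrow> nat) \<Rightarrow> nat \<Rightarrow> nat" where
  "swmoss_choice K \<tau> \<eta> Xr \<phi> t =
    (if t \<le> K then t
     else if \<exists>k\<in>{1..K}. pulls \<phi> \<tau> k t = 0 then (LEAST k. k \<in> {1..K} \<and> pulls \<phi> \<tau> k t = 0)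
     else (LEAST k. k \<in> {1..K} \<and> (\<forall>j\<in>{1..K}.
             emp_mean \<phi> Xr \<tau> j t + conf \<eta> \<tau> K (pulls \<phi> \<tau> j t)
             \<le> emp_mean \<phi> Xr \<tau> k t + conf \<eta> \<tau> K (pulls \<phi> \<tau> k t))))"

fun swmoss_hist :: "nat \<Rightarrow> nat \<Rightarrow> real \<Rightarrow> (nat \<Rightarrow> nat \<Rightarrow> real) \<Rightarrow> nat \<Rightarrow> nat list" where
  "swmoss_hist K \<tau> \<eta> Xr 0 = []"
| "swmoss_hist K \<tau> \<eta> Xr (Suc t) =
    (let h = swmoss_hist K \<tau> \<eta> Xr t in h @ [swmoss_choice K \<tau> \<eta> Xr (\<lambda>s. h ! (s - 1)) (Suc t)])"

definition swmoss :: "nat \<Rightarrow> nat \<Rightarrow> real \<Rightarrow> real \<Rightarrow> (nat \<Rightarrow> nat \<Rightarrow> real) \<Rightarrow> nat \<Rightarrow> nat" where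
  "swmoss K T V \<eta> Xr t = swmoss_hist K (swmoss_tau K T V) \<eta> Xr t ! (t - 1)"

end

theory Submission
  imports Defs
begin


lemma telesc:
  fixes \<rho> \<kappa> \<eta> C w :: real
  assumes r: "\<rho> > 1" and e: "\<eta> > 0" and c: "C > 0" and h1: "\<rho> \<le> C*((\<rho>-1)/\<eta>)"
    and h2: "\<rho> \<le> C*(\<kappa> - 1/\<eta>)" and w: "w \<ge> 0"
  shows "\<rho>*w*exp(-\<kappa>*w) \<le> C*(exp(-w/\<eta>) - exp(-\<rho>*w/\<eta>))"
proof -
  define a where "a = (\<rho>-1)/\<eta>"
  define g where "g = \<kappa> - 1/\<eta>"
  have a0: "a > 0" using r e by (simp add: a_def)
  have g0: "g > 0"
  proof (rule ccontr)
    assume "\<not> g > 0"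
    then have "C*g \<le> 0" using c by (simp add: mult_nonneg_nonpos)
    then show False using h2 r unfolding g_def by linarith
  qed
  have aw0: "a*w \<ge> 0" using a0 w by simp
  have E1: "exp(-(a*w)) \<le> 1/(1+a*w)"
  proof -
    have "1 + a*w \<le> exp(a*w)" by (rule exp_ge_add_one_self)
    then show ?thesis using aw0 by (simp add: exp_minus field_simps)
  qed
  have E2: "a*w/(1+a*w) \<le> 1 - exp(-(a*w))" using E1 aw0
    by (simp add: field_simps)
  define Mx where "Mx = max 1 (a/g)"
  have E3: "1 + a*w \<le> Mx * exp(g*w)"
  proof (cases "a \<le> g")
    case True
    have "1 + a*w \<le> 1 + g*w" using True w by (simp add: mult_right_mono)
    also have "\<dots> \<le> exp(g*w)" by (rule exp_ge_add_one_self)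
    also have "\<dots> \<le> Mx * exp(g*w)" by (simp add: Mx_def)
    finally show ?thesis .
  next
    case False
    have "1 + a*w \<le> (a/g)*(1 + g*w)" using False g0 w
      by (simp add: field_simps)
    also have "\<dots> \<le> (a/g)*exp(g*w)" using a0 g0 exp_ge_add_one_self[of "g*w"]
      by (intro mult_left_mono) auto
    also have "\<dots> \<le> Mx * exp(g*w)" unfolding Mx_def by (intro mult_right_mono) auto
    finally show ?thesis .
  qed
  have E4: "\<rho> * Mx \<le> C * a"
    using h1 h2 a0 g0 c by (auto simp: Mx_def a_def[symmetric] g_def[symmetric] field_simps max_def)
  have "\<rho>*w*exp(-g*w) \<le> \<rho>*w*Mx/(1+a*w)"
  proof -
    have "exp(-g*w)*(1+a*w) \<le> Mx" using E3 by (simp add: exp_minus field_simps)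
    then have "(\<rho>*w)*(exp(-g*w)*(1+a*w)) \<le> (\<rho>*w)*Mx" using r w by (intro mult_left_mono) auto
    then show ?thesis using r w aw0 by (simp add: field_simps)
  qed
  also have "\<dots> \<le> C*a*w/(1+a*w)" using E4 w aw0 r
  proof (intro divide_right_mono)
    have "(\<rho>*Mx)*w \<le> (C*a)*w" using E4 w by (rule mult_right_mono)
    then show "\<rho>*w*Mx \<le> C*a*w" by (simp add: algebra_simps)
  qed (use aw0 in auto)
  also have "\<dots> = C*(a*w/(1+a*w))" by simp
  also have "\<dots> \<le> C*(1 - exp(-(a*w)))" using E2 c by (intro mult_left_mono) auto
  finally have "\<rho>*w*exp(-g*w) \<le> C*(1 - exp(-(a*w)))" .
  then have "\<rho>*w*exp(-g*w)*exp(-w/\<eta>) \<le> C*(1 - exp(-(a*w)))*exp(-w/\<eta>)"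
    by (intro mult_right_mono) auto
  moreover have "exp(-\<kappa>*w) = exp(-g*w)*exp(-w/\<eta>)"
    by (simp add: g_def algebra_simps flip: exp_add)
  moreover have "exp(-\<rho>*w/\<eta>) = exp(-(a*w))*exp(-w/\<eta>)"
    using e by (simp add: a_def field_simps flip: exp_add)
  ultimately show ?thesis by (simp add: algebra_simps)
qed



lemma ln_le_half: fixes y :: real assumes "y > 0" shows "ln y \<le> y/2"
proof -
  have "ln (y / exp 1) \<le> y/exp 1 - 1" using assms by (intro ln_le_minus_one) auto
  then have "ln y \<le> y / exp 1" using assms by (simp add: ln_div)
  moreover have "y / exp 1 \<le> y/2"
    using assms exp_ge_add_one_self[of 1] by (intro divide_left_mono) auto
  ultimately show ?thesis by linarith
qed

lemma aux: fixes L z P X :: real assumes "L > 0" "z > 0" "P > 0"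
  shows "z^3/(2*L) * (X*2/(z^2*P)) = z*X/(L*P)"
  using assms by (simp add: field_simps power2_eq_square power3_eq_cube)

lemma params:
  fixes \<eta> :: real assumes eta: "\<eta> > 1/2"
  defines "C \<equiv> (2*\<eta>) powr (3/2) / ln(2*\<eta>)"
  obtains z :: real where "1 < z" "(8*z/(1+z)^2)*\<eta> \<ge> 1" "z^2 \<le> C*((z^2-1)/\<eta>)"
    "z^2 \<le> C*(8*z/(1+z)^2 - 1/\<eta>)" "C > 0"
proof (cases "\<eta> \<le> 2")
  case True
  define z where "z = sqrt(2*\<eta>)"
  have s1: "z > 1" using eta by (simp add: z_def)
  have s2: "z \<le> 2"
  proof (rule power2_le_imp_le)
    show "z^2 \<le> 2^2" using True eta by (simp add: z_def)
  qed simp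
  have ss: "z^2 = 2*\<eta>" using eta by (simp add: z_def)
  have e: "\<eta> = z^2/2" using ss by simp
  have pw: "(2*\<eta>) powr (3/2) = z^3"
  proof -
    have "(2*\<eta>) powr (1 + 1/2) = (2*\<eta>) powr 1 * (2*\<eta>) powr (1/2)" by (rule powr_add)
    then have "(2*\<eta>) powr (3/2) = (2*\<eta>) * sqrt(2*\<eta>)" using eta by (simp add: powr_half_sqrt)
    then show ?thesis using ss by (simp add: z_def power3_eq_cube power2_eq_square)
  qed
  define L where "L = ln z"
  have lnv: "ln(2*\<eta>) = 2*L" using s1 by (simp add: ss[symmetric] L_def ln_realpow)
  have L0: "L > 0" using s1 by (simp add: L_def)
  have L1: "L \<le> z - 1" using s1 by (simp add: L_def ln_le_minus_one)
  have Cv: "C = z^3/(2*L)" by (simp add: C_def pw lnv)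
  show ?thesis
  proof (rule that[of z])
    show "1 < z" by (rule s1)
    show "C > 0" using Cv L0 s1 by simp
    have "(1+z)^2 \<le> (2*z)^2" using s1 by (intro power_mono) auto
    also have "\<dots> = 4*z^2" by (simp add: power2_eq_square)
    also have "\<dots> \<le> 4*z^3" using s1 by (simp add: power2_eq_square power3_eq_cube)
    finally have "(1+z)^2 \<le> 4*z^3" .
    then have "1 \<le> 4*z^3/(1+z)^2" using s1 by (simp add: le_divide_eq)
    moreover have "8*z*\<eta> = 4*z^3" by (simp add: e power3_eq_cube power2_eq_square)
    moreover have "(8*z/(1+z)^2)*\<eta> = (8*z*\<eta>)/(1+z)^2" by simp
    ultimately show "(8*z/(1+z)^2)*\<eta> \<ge> 1" by metis
    have "z * L \<le> z*(z-1)" using L1 s1 by (intro mult_left_mono) auto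
    then have "z * L \<le> z^2 - 1" using s1 by (simp add: power2_eq_square algebra_simps)
    then have "z*(z*L) \<le> z*(z^2-1)" using s1 by (intro mult_left_mono) auto
    then have "z^2 \<le> z*(z^2-1)/L" using L0 by (simp add: le_divide_eq power2_eq_square algebra_simps)
    moreover have "C*((z^2-1)/\<eta>) = z*(z^2-1)/L" using s1 L0 by (simp add: Cv e power2_eq_square power3_eq_cube field_simps)
    ultimately show "z^2 \<le> C*((z^2-1)/\<eta>)" by simp
    have P: "z*(z-1)*(1+z)^2 \<le> 4*z^3 - (1+z)^2"
    proof -
      have "z^3 \<le> 2*z^2" using s2 s1 by (simp add: power2_eq_square power3_eq_cube)
      then have "(z-1)*(z^3-2*z^2-2*z-1) \<le> 0" using s1 by (intro mult_nonneg_nonpos) auto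
      then show ?thesis by (simp add: algebra_simps power2_eq_square power3_eq_cube power4_eq_xxxx)
    qed
    have "z*L*(1+z)^2 \<le> z*(z-1)*(1+z)^2" using L1 s1 by (intro mult_right_mono) auto
    with P have Q: "z*L*(1+z)^2 \<le> 4*z^3 - (1+z)^2" by linarith
    have pz: "(1+z)^2 > 0" using s1 by simp
    have "C*(8*z/(1+z)^2 - 1/\<eta>) = z^3/(2*L) * ((4*z^3 - (1+z)^2)*2/(z^2*(1+z)^2))"
      using s1 pz by (simp add: Cv e field_simps power2_eq_square power3_eq_cube)
    also have "\<dots> = z*(4*z^3 - (1+z)^2)/(L*(1+z)^2)"
      using s1 pz L0 aux[of L z "(1+z)^2" "4*z^3 - (1+z)^2"] by simp
    finally have CC: "C*(8*z/(1+z)^2 - 1/\<eta>) = z*(4*z^3 - (1+z)^2)/(L*(1+z)^2)" .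
    have "z*(z*L*(1+z)^2) \<le> z*(4*z^3 - (1+z)^2)" using Q s1 by (intro mult_left_mono) auto
    moreover have "z^2*(L*(1+z)^2) = z*(z*L*(1+z)^2)" by (simp add: power2_eq_square)
    ultimately have X: "z^2*(L*(1+z)^2) \<le> z*(4*z^3 - (1+z)^2)" by linarith
    have pp: "L*(1+z)^2 > 0" using L0 pz by simp
    have "z^2 \<le> z*(4*z^3 - (1+z)^2)/(L*(1+z)^2)"
      by (subst pos_le_divide_eq[OF pp]) (rule X)
    then show "z^2 \<le> C*(8*z/(1+z)^2 - 1/\<eta>)" using CC by simp
  qed
next
  case False
  define u where "u = 2*\<eta>"
  have u4: "u > 4" using False by (simp add: u_def)
  have pw: "u powr (3/2) = u * sqrt u"
  proof -
    have "u powr (1 + 1/2) = u powr 1 * u powr (1/2)" by (rule powr_add)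
    then show ?thesis using u4 by (simp add: powr_half_sqrt)
  qed
  have "ln u = 2 * ln (sqrt u)" using u4 by (simp add: ln_sqrt)
  also have "\<dots> \<le> sqrt u" using ln_le_half[of "sqrt u"] u4 by simp
  finally have lu: "ln u \<le> sqrt u" .
  have lu0: "ln u > 0" using u4 by simp
  have Cu: "C \<ge> u"
  proof -
    have "C = u * sqrt u / ln u" by (simp add: C_def u_def[symmetric] pw)
    moreover have "u * sqrt u / ln u \<ge> u" using lu lu0 u4 by (simp add: field_simps mult_left_mono)
    ultimately show ?thesis by simp
  qed
  show ?thesis
  proof (rule that[of 2])
    show "C > 0" using Cu u4 by simp
    show "(8*2/(1+2)^2)*\<eta> \<ge> (1::real)" using False by simp
    have "C*(3/\<eta>) \<ge> u*(3/\<eta>)" using Cu False by (intro mult_right_mono) auto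
    then show "(2::real)^2 \<le> C*((2^2-1)/\<eta>)" using False by (simp add: u_def)
    have "C*(16/9 - 1/\<eta>) \<ge> u*(16/9 - 1/\<eta>)" using Cu False by (intro mult_right_mono) (auto simp: field_simps)
    moreover have "u*(16/9 - 1/\<eta>) \<ge> 4" using False by (simp add: u_def field_simps)
    ultimately show "(2::real)^2 \<le> C*(8*2/(1+2)^2 - 1/\<eta>)" by simp
  qed (simp)
qed



lemma quad_ident:
  fixes S r v z :: real assumes r: "r > 0" and z: "z > 0"
  shows "(8 * S/(r * (1+z))) * v * S - (8 * S/(r * (1+z)))^2 * v^2/8 - 8 * z * S^2/(1+z)^2
       = 8 * S^2/(r^2 * (1+z)^2) * ((v-r) * (z * r-v))"
proof -
  define P where "P = 1 + z"
  have P: "P > 0" using z by (simp add: P_def)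
  have e1: "(8 * S/(r * P)) * v * S = (8 * S^2 * v * r * P)/(r^2 * P^2)"
    using r P by (simp add: power2_eq_square)
  have e2: "(8 * S/(r * P))^2 * v^2/8 = (8 * S^2 * v^2)/(r^2 * P^2)"
    using r P by (simp add: power2_eq_square mult_ac)
  have e3: "8 * z * S^2/P^2 = (8 * S^2 * z * r^2)/(r^2 * P^2)"
    using r P by (simp add: power2_eq_square)
  have e4: "(v-r) * (z * r-v) = v * r * P - v^2 - z * r^2"
    by (simp add: P_def power2_eq_square algebra_simps)
  have "(8 * S/(r * P)) * v * S - (8 * S/(r * P))^2 * v^2/8 - 8 * z * S^2/P^2
      = (8 * S^2 * v * r * P - 8 * S^2 * v^2 - 8 * S^2 * z * r^2)/(r^2 * P^2)"
    unfolding e1 e2 e3 by (simp add: diff_divide_distrib)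
  also have "\<dots> = 8 * S^2/(r^2 * P^2) * ((v-r) * (z * r-v))"
    unfolding e4 by (simp add: algebra_simps)
  finally show ?thesis by (simp add: P_def)
qed

lemma expo:
  fixes tau Kr x \<eta> z L n D :: real
  assumes tau: "tau > 0" and Kr: "Kr > 0" and x: "x > 0" and eta: "\<eta> > 0" and z: "z > 1"
    and L: "L > 0" and nL: "L \<le> n" and nU: "n \<le> z^2 * L"
    and D: "D \<ge> n * (x + sqrt (\<eta> * max (ln (tau / (Kr * n))) 0 / n))"
  defines "E \<equiv> L * x^2 + \<eta> * max (ln (tau / (Kr * (z^2 * L)))) 0"
  shows "(8 * sqrt E/(sqrt L * (1+z))) * D - (8 * sqrt E/(sqrt L * (1+z)))^2 * n/8 \<ge> (8 * z/(1+z)^2) * E"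
proof -
  define m where "m = max (ln (tau / (Kr * n))) 0"
  define q where "q = max (ln (tau / (Kr * (z^2 * L)))) 0"
  have n0: "n > 0" using L nL by simp
  have qm: "q \<le> m"
  proof -
    have "tau / (Kr * (z^2 * L)) \<le> tau / (Kr * n)" using tau Kr n0 nU
      by (intro divide_left_mono mult_left_mono) auto
    then have "ln (tau / (Kr * (z^2 * L))) \<le> ln (tau / (Kr * n))" using tau Kr n0 L z
      by (subst ln_le_cancel_iff) auto
    then show ?thesis by (simp add: q_def m_def max_def)
  qed
  have m0: "m \<ge> 0" by (simp add: m_def)
  define c where "c = sqrt (\<eta> * m / n)"
  have c0: "c \<ge> 0" using eta m0 n0 by (simp add: c_def)
  have c2: "n * c^2 = \<eta> * m" using eta m0 n0 by (simp add: c_def)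
  have Dc: "D \<ge> n * x + n * c" using D by (simp add: c_def m_def algebra_simps)
  have D0: "D \<ge> 0" using Dc n0 x c0 by (smt (verit) mult_nonneg_nonneg)
  have E0: "E \<ge> 0" unfolding E_def using L eta by (intro add_nonneg_nonneg mult_nonneg_nonneg) auto
  have "n * E = n * L * x^2 + n * \<eta>* q" by (simp add: E_def q_def algebra_simps)
  also have "\<dots> \<le> n * n * x^2 + n * \<eta>* m"
  proof -
    have "n * L * x^2 \<le> n * n * x^2" using nL n0 by (intro mult_right_mono mult_left_mono) auto
    moreover have "n * \<eta>* q \<le> n * \<eta>* m" using qm n0 eta by (intro mult_left_mono) auto
    ultimately show ?thesis by linarith
  qed
  also have "\<dots> = (n * x)^2 + (n * c)^2" using c2 by (simp add: power2_eq_square algebra_simps)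
  also have "\<dots> \<le> (n * x + n * c)^2" using n0 x c0 by (simp add: power2_eq_square algebra_simps)
  also have "\<dots> \<le> D^2" using Dc n0 x c0 by (intro power_mono) auto
  finally have nED: "n * E \<le> D^2" .
  have DS: "sqrt n * sqrt E \<le> D"
  proof -
    have "sqrt (n * E) \<le> sqrt (D^2)" using nED by (rule real_sqrt_le_mono)
    then show ?thesis using D0 by (simp add: real_sqrt_mult)
  qed
  define S where "S = sqrt E"
  define r where "r = sqrt L"
  define v where "v = sqrt n"
  have r0: "r > 0" using L by (simp add: r_def)
  have vr: "r \<le> v" using nL by (simp add: r_def v_def)
  have vz: "v \<le> z * r"
  proof -
    have "sqrt n \<le> sqrt (z^2 * L)" using nU by (rule real_sqrt_le_mono)
    then show ?thesis using z by (simp add: v_def r_def real_sqrt_mult)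
  qed
  have S0: "S \<ge> 0" using E0 by (simp add: S_def)
  define lam where "lam = 8 * S/(r * (1+z))"
  have lam0: "lam \<ge> 0" using S0 r0 z by (simp add: lam_def)
  have "lam * (v * S) \<le> lam * D" using DS lam0 by (intro mult_left_mono) (auto simp: v_def S_def)
  moreover have "lam * v * S - lam^2 * v^2/8 - 8 * z * S^2/(1+z)^2 \<ge> 0"
  proof -
    have "lam * v * S - lam^2 * v^2/8 - 8 * z * S^2/(1+z)^2 = 8 * S^2/(r^2 * (1+z)^2) * ((v-r) * (z * r-v))"
      unfolding lam_def by (rule quad_ident[OF r0]) (use z in simp)
    also have "\<dots> \<ge> 0" using vr vz r0 z by (intro mult_nonneg_nonneg) auto
    finally show ?thesis .
  qed
  moreover have "v^2 = n" using n0 by (simp add: v_def)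
  moreover have "S^2 = E" using E0 by (simp add: S_def)
  ultimately have "lam * D - lam^2 * n/8 \<ge> (8 * z/(1+z)^2) * E" by (simp add: algebra_simps) 
  then show ?thesis by (simp add: lam_def S_def r_def)
qed

lemma bucket_bound:
  fixes tau Kr x \<eta> \<rho> \<kappa> L :: real
  assumes tau: "tau > 0" and Kr: "Kr > 0" and L: "L > 0" and r: "\<rho> > 0" and ke: "\<kappa>* \<eta> \<ge> 1" and eta: "\<eta> > 0"
  shows "exp (-(\<kappa> * (L * x^2 + \<eta> * max (ln (tau / (Kr * (\<rho> * L)))) 0)))
     \<le> (Kr * \<rho>* L/tau) * exp (-(\<kappa>* (L * x^2)))"
proof -
  define q where "q = max (ln (tau / (Kr * (\<rho> * L)))) 0"
  have k0: "\<kappa> > 0" using ke eta by (smt (verit) mult_nonpos_nonneg)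
  have "exp (-(\<kappa>* \<eta>* q)) \<le> Kr * \<rho>* L/tau"
  proof (cases "ln (tau / (Kr * (\<rho> * L))) \<le> 0")
    case True
    then have "q = 0" by (simp add: q_def)
    moreover have "tau / (Kr * (\<rho> * L)) \<le> 1" using True tau Kr L r
      by (simp add: ln_le_zero_iff)
    then have "1 \<le> Kr * \<rho>* L/tau" using tau Kr L r by (simp add: field_simps)
    ultimately show ?thesis by simp
  next
    case False
    then have qv: "q = ln (tau / (Kr * (\<rho> * L)))" "q > 0" by (auto simp: q_def)
    have "exp (-(\<kappa>* \<eta>* q)) \<le> exp (-q)" using ke qv(2) by (simp add: mult_right_mono)
    also have "\<dots> = Kr * \<rho>* L/tau"
    proof -
      have "exp q = tau / (Kr * (\<rho> * L))" unfolding qv(1) using tau Kr L r by (intro exp_ln) simp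
      then show ?thesis by (simp only: exp_minus inverse_divide)
    qed
    finally show ?thesis .
  qed
  then have "exp (-(\<kappa>* (L * x^2))) * exp (-(\<kappa>* \<eta>* q)) \<le> exp (-(\<kappa>* (L * x^2))) * (Kr * \<rho>* L/tau)"
    by (intro mult_left_mono) auto
  then show ?thesis by (simp add: q_def algebra_simps flip: exp_add)
qed



lemma sum_bound:
  fixes tau Kr x \<eta> l z C :: real and J :: nat
  assumes tau: "tau > 0" and Kr: "Kr > 0" and x: "x > 0" and eta: "\<eta> > 0" and l: "l > 0"
    and z: "z > 1" and ke: "(8 * z/(1+z)^2) * \<eta> \<ge> 1" and C: "C > 0"
    and h1: "z^2 \<le> C * ((z^2-1)/\<eta>)" and h2: "z^2 \<le> C * (8 * z/(1+z)^2 - 1/\<eta>)"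
  shows "(\<Sum>j<J. exp (-((8 * z/(1+z)^2) * ((l * (z^2)^j) * x^2
            + \<eta> * max (ln (tau / (Kr * (z^2 * (l * (z^2)^j))))) 0))))
         \<le> C * (Kr/(tau * x^2)) * exp (-(x^2 * l/\<eta>))"
proof -
  define \<kappa> where "\<kappa> = 8 * z/(1+z)^2"
  define w where "w j = (l * (z^2)^j) * x^2" for j
  define f where "f j = exp (-(w j/\<eta>))" for j
  have z2: "z^2 > 1" using z by (simp add: one_less_power)
  have w0: "w j \<ge> 0" for j using l x z by (simp add: w_def)
  have wS: "w (Suc j) = z^2 * w j" for j by (simp add: w_def)
  have "exp (-(\<kappa> * ((l * (z^2)^j) * x^2 + \<eta> * max (ln (tau / (Kr * (z^2 * (l * (z^2)^j))))) 0)))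
        \<le> (Kr/(tau * x^2)) * C * (f j - f (Suc j))" for j
  proof -
    have Lp: "l * (z^2)^j > 0" using l z by simp
    have "exp (-(\<kappa> * ((l * (z^2)^j) * x^2 + \<eta> * max (ln (tau / (Kr * (z^2 * (l * (z^2)^j))))) 0)))
       \<le> (Kr * z^2 * (l * (z^2)^j)/tau) * exp (-(\<kappa> * ((l * (z^2)^j) * x^2)))"
      using bucket_bound[OF tau Kr Lp _ _ eta, of "z^2" \<kappa> x] z ke by (simp add: \<kappa>_def)
    also have "\<dots> = (Kr/(tau * x^2)) * (z^2 * w j * exp (-\<kappa> * w j))"
      using x tau by (simp add: w_def field_simps)
    also have "\<dots> \<le> (Kr/(tau * x^2)) * (C * (exp (-w j/\<eta>) - exp (-(z^2) * w j/\<eta>)))"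
      using telesc[OF z2 eta C h1 _ w0, of \<kappa>] h2 tau Kr x
      by (intro mult_left_mono) (auto simp: \<kappa>_def)
    also have "\<dots> = (Kr/(tau * x^2)) * C * (f j - f (Suc j))"
      by (simp add: f_def wS)
    finally show ?thesis by (simp add: \<kappa>_def)
  qed
  then have "(\<Sum>j<J. exp (-((8 * z/(1+z)^2) * ((l * (z^2)^j) * x^2
            + \<eta> * max (ln (tau / (Kr * (z^2 * (l * (z^2)^j))))) 0))))
        \<le> (\<Sum>j<J. (Kr/(tau * x^2)) * C * (f j - f (Suc j)))"
    by (intro sum_mono) (simp add: \<kappa>_def)
  also have "\<dots> = (Kr/(tau * x^2)) * C * (f 0 - f J)"
    by (simp only: sum_distrib_left[symmetric] sum_lessThan_telescope')
  also have "\<dots> \<le> (Kr/(tau * x^2)) * C * f 0"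
    using tau Kr x C by (intro mult_left_mono) (auto simp: f_def)
  also have "\<dots> = C * (Kr/(tau * x^2)) * exp (-(x^2 * l/\<eta>))"
    by (simp add: f_def w_def mult_ac)
  finally show ?thesis .
qed



lemma hist_length[simp]: "length (swmoss_hist K \<tau> \<eta> Xr u) = u"
  by (induction u) (auto simp: Let_def)

lemma hist_nth: "s < u \<Longrightarrow> swmoss_hist K \<tau> \<eta> Xr u ! s = swmoss_hist K \<tau> \<eta> Xr (Suc s) ! s"
proof (induction u)
  case 0 then show ?case by simp
next
  case (Suc u)
  show ?case
  proof (cases "s < u")
    case True
    then show ?thesis using Suc by (simp add: Let_def nth_append)
  next
    case False
    then have "s = u" using Suc by simp
    then show ?thesis by simp
  qed
qed

lemma swmoss_eq_hist:
  assumes "1 \<le> s" "s \<le> u"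
  shows "swmoss K T V \<eta> Xr s = swmoss_hist K (swmoss_tau K T V) \<eta> Xr u ! (s - 1)"
  using assms hist_nth[of "s-1" u K "swmoss_tau K T V" \<eta> Xr] by (simp add: swmoss_def)

lemma window_ge1: "s \<in> window \<tau> t \<Longrightarrow> 1 \<le> s \<and> s < t"
  by (auto simp: window_def)

lemma choice_cong:
  assumes "\<And>s j. 1 \<le> s \<Longrightarrow> s < t \<Longrightarrow> j \<in> {1..K} \<Longrightarrow> Xr s j = Xr' s j"
  shows "swmoss_choice K \<tau> \<eta> Xr \<phi> t = swmoss_choice K \<tau> \<eta> Xr' \<phi> t"
proof -
  have em: "emp_mean \<phi> Xr \<tau> j t = emp_mean \<phi> Xr' \<tau> j t" if "j \<in> {1..K}" for j
    unfolding emp_mean_def using assms that window_ge1 by (auto intro!: sum.cong arg_cong2[where f="(/)"])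
  have "(\<lambda>k. k \<in> {1..K} \<and> (\<forall>j\<in>{1..K}.
             emp_mean \<phi> Xr \<tau> j t + conf \<eta> \<tau> K (pulls \<phi> \<tau> j t)
             \<le> emp_mean \<phi> Xr \<tau> k t + conf \<eta> \<tau> K (pulls \<phi> \<tau> k t)))
      = (\<lambda>k. k \<in> {1..K} \<and> (\<forall>j\<in>{1..K}.
             emp_mean \<phi> Xr' \<tau> j t + conf \<eta> \<tau> K (pulls \<phi> \<tau> j t)
             \<le> emp_mean \<phi> Xr' \<tau> k t + conf \<eta> \<tau> K (pulls \<phi> \<tau> k t)))"
    using em by (auto intro!: ext)
  note eqP = this
  show ?thesis unfolding swmoss_choice_def by (simp only: eqP)
qed

lemma hist_cong:
  assumes "\<And>s j. 1 \<le> s \<Longrightarrow> s < u \<Longrightarrow> j \<in> {1..K} \<Longrightarrow> Xr s j = Xr' s j"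
  shows "swmoss_hist K \<tau> \<eta> Xr u = swmoss_hist K \<tau> \<eta> Xr' u"
  using assms
proof (induction u)
  case 0 then show ?case by simp
next
  case (Suc u)
  have IH: "swmoss_hist K \<tau> \<eta> Xr u = swmoss_hist K \<tau> \<eta> Xr' u" using Suc by auto
  have "swmoss_choice K \<tau> \<eta> Xr (\<lambda>s. swmoss_hist K \<tau> \<eta> Xr' u ! (s - 1)) (Suc u)
      = swmoss_choice K \<tau> \<eta> Xr' (\<lambda>s. swmoss_hist K \<tau> \<eta> Xr' u ! (s - 1)) (Suc u)"
    by (rule choice_cong) (use Suc.prems in auto)
  then show ?case by (simp add: Let_def IH)
qed

lemma choice_meas:
  fixes Y :: "'b \<Rightarrow> nat \<Rightarrow> nat \<Rightarrow> real"
  assumes [measurable]: "\<And>s j. (\<lambda>v. Y v s j) \<in> borel_measurable N"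
  shows "(\<lambda>v. swmoss_choice K \<tau> \<eta> (Y v) \<phi> t) \<in> measurable N (count_space UNIV)"
  unfolding swmoss_choice_def emp_mean_def by measurable

lemma hist_meas:
  fixes Y :: "'b \<Rightarrow> nat \<Rightarrow> nat \<Rightarrow> real"
  assumes Y: "\<And>s j. (\<lambda>v. Y v s j) \<in> borel_measurable N"
  shows "(\<lambda>v. swmoss_hist K \<tau> \<eta> (Y v) u) \<in> measurable N (count_space UNIV)"
proof (induction u)
  case 0 then show ?case by simp
next
  case (Suc u)
  have "(\<lambda>v. (\<lambda>h. h @ [swmoss_choice K \<tau> \<eta> (Y v) (\<lambda>s. h ! (s - 1)) (Suc u)]) (swmoss_hist K \<tau> \<eta> (Y v) u))
        \<in> measurable N (count_space UNIV)"
  proof (rule measurable_compose_countable[where f="\<lambda>h v. h @ [swmoss_choice K \<tau> \<eta> (Y v) (\<lambda>s. h ! (s - 1)) (Suc u)]"])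
    fix h :: "nat list"
    have "(\<lambda>v. swmoss_choice K \<tau> \<eta> (Y v) (\<lambda>s. h ! (s - 1)) (Suc u)) \<in> measurable N (count_space UNIV)"
      by (rule choice_meas[OF Y])
    then show "(\<lambda>v. h @ [swmoss_choice K \<tau> \<eta> (Y v) (\<lambda>s. h ! (s - 1)) (Suc u)]) \<in> measurable N (count_space UNIV)"
      by (rule measurable_compose) simp
  qed (rule Suc)
  then show ?case by (simp add: Let_def)
qed



lemma core:
  fixes M :: "'a measure" and X :: "nat \<Rightarrow> nat \<Rightarrow> 'a \<Rightarrow> real" and \<mu> :: "nat \<Rightarrow> nat \<Rightarrow> real"
    and K T k t :: nat and V \<eta> lam :: real
  assumes P: "prob_space M"
    and meas: "\<forall>s\<in>{1..T}. \<forall>j\<in>{1..K}. X s j \<in> borel_measurable M"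
    and indep: "prob_space.indep_vars M (\<lambda>_. borel) (\<lambda>(s, j). X s j) ({1..T} \<times> {1..K})"
    and subg: "\<forall>s\<in>{1..T}. \<forall>j\<in>{1..K}. \<forall>r::real.
                 integrable M (\<lambda>\<omega>. exp (r * (X s j \<omega> - \<mu> s j))) \<and>
                 (\<integral>\<omega>. exp (r * (X s j \<omega> - \<mu> s j)) \<partial>M) \<le> exp (r\<^sup>2 / 8)"
    and k: "k \<in> {1..K}" and t: "t \<le> T"
  defines "Z u \<omega> \<equiv> exp (\<Sum>s\<in>{s\<in>window (swmoss_tau K T V) t. s < u \<and> swmoss K T V \<eta> (\<lambda>s j. X s j \<omega>) s = k}.
                         (lam * (X s k \<omega> - \<mu> s k) - lam^2/8))"
  shows "u \<le> t \<Longrightarrow> integrable M (Z u) \<and> integral\<^sup>L M (Z u) \<le> 1"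
proof (induction u)
  case 0
  interpret prob_space M by (rule P)
  have "Z 0 = (\<lambda>\<omega>. 1)" by (simp add: Z_def fun_eq_iff)
  then show ?case by simp
next
  case (Suc u)
  interpret prob_space M by (rule P)
  define \<tau> where "\<tau> = swmoss_tau K T V"
  have IH: "integrable M (Z u)" "integral\<^sup>L M (Z u) \<le> 1" using Suc by auto
  show ?case
  proof (cases "u \<in> window \<tau> t")
    case False
    have "Z (Suc u) = Z u"
      unfolding Z_def \<tau>_def[symmetric] using False by (intro ext arg_cong[where f=exp] sum.cong) (auto simp: less_Suc_eq)
    then show ?thesis using IH by simp
  next
    case True
    then have u1: "1 \<le> u" and ut: "u < t" by (auto simp: window_def)
    define A where "A = {1..<u} \<times> {1..K}"
    define B where "B = {(u,k)}"
    define I where "I = {1..T} \<times> {1..K}"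
    define Yv where "Yv v s j = (if (s,j) \<in> A then v (s,j) else (0::real))" for v :: "nat \<times> nat \<Rightarrow> real" and s j
    define RA where "RA \<omega> = restrict (\<lambda>i. (\<lambda>(s, j). X s j) i \<omega>) A" for \<omega>
    define RB where "RB \<omega> = restrict (\<lambda>i. (\<lambda>(s, j). X s j) i \<omega>) B" for \<omega>
    define Fh where "Fh h v = (if h ! (u-1) = k then 1 else 0) *
        exp (\<Sum>s\<in>{s\<in>window \<tau> t. s < u \<and> h ! (s-1) = k}. (lam * (Yv v s k - \<mu> s k) - lam^2/8))"
      for h :: "nat list" and v
    define F where "F v = Fh (swmoss_hist K \<tau> \<eta> (Yv v) u) v" for v
    define G where "G v = exp (lam * (v (u,k) - \<mu> u k) - lam^2/8)" for v :: "nat \<times> nat \<Rightarrow> real"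
    have AI: "A \<subseteq> I" "B \<subseteq> I" "A \<inter> B = {}" using ut t k u1 by (auto simp: A_def B_def I_def)
    have Yv_meas[measurable]: "(\<lambda>v. Yv v s j) \<in> borel_measurable (PiM A (\<lambda>_. borel))" for s j
      unfolding Yv_def by (cases "(s,j) \<in> A") auto
    have F_meas: "F \<in> borel_measurable (PiM A (\<lambda>_. borel))"
      unfolding F_def
      by (rule measurable_compose_countable[where f=Fh, OF _ hist_meas[OF Yv_meas]])
         (unfold Fh_def, measurable)
    have G_meas: "G \<in> borel_measurable (PiM B (\<lambda>_. borel))"
      unfolding G_def B_def by measurable
    have ind: "indep_var (PiM A (\<lambda>_. borel)) RA (PiM B (\<lambda>_. borel)) RB"
      unfolding RA_def RB_def using indep_var_restrict[OF indep[unfolded I_def[symmetric]] AI(3) AI(1) AI(2)] .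
    have ind2: "indep_var borel (F \<circ> RA) borel (G \<circ> RB)"
      by (rule indep_var_compose[OF ind F_meas G_meas])
    have RA_meas: "RA \<in> measurable M (PiM A (\<lambda>_. borel))"
      unfolding RA_def using meas AI(1) by (intro measurable_restrict) (auto simp: I_def)
    have RB_meas: "RB \<in> measurable M (PiM B (\<lambda>_. borel))"
      unfolding RB_def using meas AI(2) by (intro measurable_restrict) (auto simp: I_def)
    define \<phi> where "\<phi> \<omega> = swmoss K T V \<eta> (\<lambda>s j. X s j \<omega>)" for \<omega>
    have FRA: "(F \<circ> RA) \<omega> = (if \<phi> \<omega> u = k then 1 else 0) * Z u \<omega>" for \<omega>
    proof -
      have YX: "Yv (RA \<omega>) s j = X s j \<omega>" if "1 \<le> s" "s < u" "j \<in> {1..K}" for s j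
        using that by (auto simp: Yv_def RA_def A_def)
      have H: "swmoss_hist K \<tau> \<eta> (Yv (RA \<omega>)) u = swmoss_hist K \<tau> \<eta> (\<lambda>s j. X s j \<omega>) u"
        by (rule hist_cong) (use YX in auto)
      have ph: "\<phi> \<omega> s = swmoss_hist K \<tau> \<eta> (\<lambda>s j. X s j \<omega>) u ! (s-1)" if "1 \<le> s" "s \<le> u" for s
        unfolding \<phi>_def \<tau>_def using that by (rule swmoss_eq_hist)
      have S: "{s\<in>window \<tau> t. s < u \<and> swmoss_hist K \<tau> \<eta> (\<lambda>s j. X s j \<omega>) u ! (s-1) = k}
             = {s\<in>window \<tau> t. s < u \<and> \<phi> \<omega> s = k}"
        using ph window_ge1 by fastforce
      show ?thesis
        unfolding comp_def F_def Fh_def H S Z_def \<tau>_def[symmetric] \<phi>_def[symmetric] ph[OF u1 order_refl]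
        using YX k window_ge1 by (auto intro!: arg_cong[where f=exp] sum.cong)
    qed
    have GRB: "(G \<circ> RB) \<omega> = exp (lam * (X u k \<omega> - \<mu> u k) - lam^2/8)" for \<omega>
      by (simp add: G_def RB_def B_def)
    have ZS: "Z (Suc u) \<omega> = Z u \<omega> - (F \<circ> RA) \<omega> + (F \<circ> RA) \<omega> * (G \<circ> RB) \<omega>" for \<omega>
    proof (cases "\<phi> \<omega> u = k")
      case True
      have "{s\<in>window \<tau> t. s < Suc u \<and> \<phi> \<omega> s = k} = insert u {s\<in>window \<tau> t. s < u \<and> \<phi> \<omega> s = k}"
        using True \<open>u \<in> window \<tau> t\<close> by (auto simp: less_Suc_eq)
      then have "Z (Suc u) \<omega> = Z u \<omega> * exp (lam * (X u k \<omega> - \<mu> u k) - lam^2/8)"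
        unfolding Z_def \<tau>_def[symmetric] \<phi>_def[symmetric]
        by (simp add: window_def exp_add[symmetric] add.commute)
      then show ?thesis using FRA GRB True by simp
    next
      case False
      have "{s\<in>window \<tau> t. s < Suc u \<and> \<phi> \<omega> s = k} = {s\<in>window \<tau> t. s < u \<and> \<phi> \<omega> s = k}"
        using False by (auto simp: less_Suc_eq)
      then have "Z (Suc u) \<omega> = Z u \<omega>"
        unfolding Z_def \<tau>_def[symmetric] \<phi>_def[symmetric] by simp
      then show ?thesis using FRA False by simp
    qed
    have intF: "integrable M (F \<circ> RA)"
    proof (rule Bochner_Integration.integrable_bound[OF IH(1)])
      show "F \<circ> RA \<in> borel_measurable M" using F_meas RA_meas by (rule measurable_comp[rotated])
      show "AE x in M. norm ((F \<circ> RA) x) \<le> norm (Z u x)"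
        by (auto simp: FRA[unfolded comp_def])
    qed
    have u_T: "u \<in> {1..T}" using u1 ut t by auto
    have Geq: "G \<circ> RB = (\<lambda>\<omega>. exp (lam * (X u k \<omega> - \<mu> u k)) * exp (- (lam^2/8)))"
      by (rule ext) (simp add: GRB[unfolded comp_def] flip: exp_add)
    have intG: "integrable M (G \<circ> RB)"
    proof -
      have "integrable M (\<lambda>\<omega>. exp (lam * (X u k \<omega> - \<mu> u k)) * exp (- (lam^2/8)))"
        using subg u_T k by (intro integrable_mult_left) auto
      then show ?thesis by (simp only: Geq)
    qed
    have EG: "integral\<^sup>L M (G \<circ> RB) \<le> 1"
    proof -
      have "integral\<^sup>L M (G \<circ> RB) = (\<integral>\<omega>. exp (lam * (X u k \<omega> - \<mu> u k)) \<partial>M) * exp (- (lam^2/8))"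
        by (simp only: Geq integral_mult_left_zero)
      also have "\<dots> \<le> exp (lam^2/8) * exp (- (lam^2/8))"
        using subg u_T k by (intro mult_right_mono) auto
      also have "\<dots> = 1" by (simp flip: exp_add)
      finally show ?thesis .
    qed
    have EF: "integral\<^sup>L M (F \<circ> RA) \<ge> 0"
      by (intro integral_nonneg_AE) (auto simp: FRA[unfolded comp_def] Z_def)
    have intFG: "integrable M (\<lambda>\<omega>. (F \<circ> RA) \<omega> * (G \<circ> RB) \<omega>)"
      by (rule indep_var_integrable[OF ind2 intF intG])
    have EFG: "(\<integral>\<omega>. (F \<circ> RA) \<omega> * (G \<circ> RB) \<omega> \<partial>M) = integral\<^sup>L M (F \<circ> RA) * integral\<^sup>L M (G \<circ> RB)"
      by (rule indep_var_lebesgue_integral[OF ind2 intF intG])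
    have Zeq: "Z (Suc u) = (\<lambda>\<omega>. Z u \<omega> - (F \<circ> RA) \<omega> + (F \<circ> RA) \<omega> * (G \<circ> RB) \<omega>)"
      using ZS by (simp add: fun_eq_iff)
    have intZ: "integrable M (Z (Suc u))"
      unfolding Zeq using IH(1) intF[unfolded comp_def] intFG
      by (intro Bochner_Integration.integrable_add Bochner_Integration.integrable_diff) auto
    have i1: "integrable M (\<lambda>\<omega>. Z u \<omega> - (F \<circ> RA) \<omega>)"
      by (rule Bochner_Integration.integrable_diff[OF IH(1) intF])
    have "integral\<^sup>L M (Z (Suc u)) = (\<integral>\<omega>. Z u \<omega> - (F \<circ> RA) \<omega> \<partial>M) + (\<integral>\<omega>. (F \<circ> RA) \<omega> * (G \<circ> RB) \<omega> \<partial>M)"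
      unfolding Zeq by (rule Bochner_Integration.integral_add[OF i1 intFG])
    also have "\<dots> = integral\<^sup>L M (Z u) - integral\<^sup>L M (F \<circ> RA) + integral\<^sup>L M (F \<circ> RA) * integral\<^sup>L M (G \<circ> RB)"
      using Bochner_Integration.integral_diff[OF IH(1) intF] EFG by simp
    also have "\<dots> \<le> integral\<^sup>L M (Z u)"
      using EF EG by (smt (verit) mult_left_le)
    finally show ?thesis using IH intZ by simp
  qed
qed



lemma bucket_exists:
  fixes \<rho> l n :: real
  assumes "\<rho> > 1" "l > 0" "l \<le> n" "n < l * \<rho>^J"
  shows "\<exists>j<J. l * \<rho>^j \<le> n \<and> n < \<rho> * (l * \<rho>^j)"
  using assms(4)
proof (induction J)
  case 0 then show ?case using assms by simp
next
  case (Suc J)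
  show ?case
  proof (cases "n < l * \<rho>^J")
    case True then show ?thesis using Suc by (meson less_SucI)
  next
    case False then show ?thesis using Suc by (intro exI[of _ J]) (auto simp: mult_ac)
  qed
qed

lemma tau_pos:
  assumes "K \<ge> 1" "T \<ge> 1" "V > 0"
  shows "swmoss_tau K T V \<ge> 1"
proof -
  have "real K powr (1/3) * (real T / V) powr (2/3) > 0" using assms by simp
  then show ?thesis unfolding swmoss_tau_def by linarith
qed

lemma pulls_le: "pulls \<phi> \<tau> k t \<le> \<tau>"
proof -
  have "pulls \<phi> \<tau> k t \<le> card (window \<tau> t)" unfolding pulls_def
    by (intro card_mono) (auto simp: window_def)
  also have "\<dots> \<le> \<tau>" by (simp add: window_def)
  finally show ?thesis .
qed

lemma main_gen:
  fixes M :: "'a measure" and X :: "nat \<Rightarrow> nat \<Rightarrow> 'a \<Rightarrow> real" and \<mu> :: "nat \<Rightarrow> nat \<Rightarrow> real"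
    and K T k t :: nat and V \<eta> x l \<sigma> :: real and Ev :: "'a set"
  assumes P: "prob_space M"
    and meas: "\<forall>s\<in>{1..T}. \<forall>j\<in>{1..K}. X s j \<in> borel_measurable M"
    and indep: "prob_space.indep_vars M (\<lambda>_. borel) (\<lambda>(s, j). X s j) ({1..T} \<times> {1..K})"
    and subg: "\<forall>s\<in>{1..T}. \<forall>j\<in>{1..K}. \<forall>r::real.
                 integrable M (\<lambda>\<omega>. exp (r * (X s j \<omega> - \<mu> s j))) \<and>
                 (\<integral>\<omega>. exp (r * (X s j \<omega> - \<mu> s j)) \<partial>M) \<le> exp (r\<^sup>2 / 8)"
    and V: "V > 0" and eta: "\<eta> > 1/2"
    and k: "k \<in> {1..K}" and t: "t \<in> {1..T}" and x: "x > 0" and l: "l \<ge> 1"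
    and sig: "\<sigma>^2 = 1"
    and Esub: "Ev \<subseteq> space M"
    and Eprop: "\<And>\<omega>. \<omega> \<in> Ev \<Longrightarrow>
        real (pulls (swmoss K T V \<eta> (\<lambda>s j. X s j \<omega>)) (swmoss_tau K T V) k t) \<ge> l \<and>
        \<sigma> * (\<Sum>s\<in>{s\<in>window (swmoss_tau K T V) t. swmoss K T V \<eta> (\<lambda>s j. X s j \<omega>) s = k}. (X s k \<omega> - \<mu> s k))
        \<ge> real (pulls (swmoss K T V \<eta> (\<lambda>s j. X s j \<omega>)) (swmoss_tau K T V) k t)
           * (x + conf \<eta> (swmoss_tau K T V) K (pulls (swmoss K T V \<eta> (\<lambda>s j. X s j \<omega>)) (swmoss_tau K T V) k t))"
  shows "measure M Ev \<le> (2 * \<eta>) powr (3/2) / ln (2 * \<eta>) * (real K / (real (swmoss_tau K T V) * x\<^sup>2))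
             * exp (- (x\<^sup>2 * l / \<eta>))"
proof -
  interpret prob_space M by (rule P)
  define C where "C = (2 * \<eta>) powr (3/2) / ln (2 * \<eta>)"
  obtain z where z1: "1 < z" and ke: "(8 * z/(1+z)^2) * \<eta> \<ge> 1" and h1: "z^2 \<le> C * ((z^2-1)/\<eta>)"
    and h2: "z^2 \<le> C * (8 * z/(1+z)^2 - 1/\<eta>)" and C0: "C > 0"
    using params[OF eta] unfolding C_def by blast
  define \<tau> where "\<tau> = swmoss_tau K T V"
  have K1: "K \<ge> 1" using k by auto
  have T1: "T \<ge> 1" using t by auto
  have tau1: "\<tau> \<ge> 1" unfolding \<tau>_def by (rule tau_pos[OF K1 T1 V])
  define \<rho> where "\<rho> = z^2"
  have rho1: "\<rho> > 1" using z1 by (simp add: \<rho>_def one_less_power)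
  have l0: "l > 0" using l by simp
  obtain J where J: "real \<tau> / l < \<rho>^J" using real_arch_pow[OF rho1] by blast
  have tauJ: "real \<tau> < l * \<rho>^J" using J l0 by (simp add: field_simps)
  define \<kappa> where "\<kappa> = 8 * z/(1+z)^2"
  define Lj where "Lj j = l * (z^2)^j" for j
  define Ej where "Ej j = Lj j * x^2 + \<eta> * max (ln (real \<tau> / (real K * (z^2 * Lj j)))) 0" for j
  define lamj where "lamj j = 8 * sqrt (Ej j) / (sqrt (Lj j) * (1+z))" for j
  define \<phi> where "\<phi> \<omega> = swmoss K T V \<eta> (\<lambda>s j. X s j \<omega>)" for \<omega>
  define Pw where "Pw \<omega> = {s\<in>window \<tau> t. \<phi> \<omega> s = k}" for \<omega>
  define Dw where "Dw \<omega> = (\<Sum>s\<in>Pw \<omega>. (X s k \<omega> - \<mu> s k))" for \<omega>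
  define nw where "nw \<omega> = pulls (\<phi> \<omega>) \<tau> k t" for \<omega>
  have nw_card: "nw \<omega> = card (Pw \<omega>)" for \<omega> by (simp add: nw_def pulls_def Pw_def)
  have finP: "finite (Pw \<omega>)" for \<omega> by (simp add: Pw_def window_def)
  define Zj where "Zj j \<omega> = exp (\<Sum>s\<in>{s\<in>window \<tau> t. s < t \<and> \<phi> \<omega> s = k}.
                         ((\<sigma> * lamj j) * (X s k \<omega> - \<mu> s k) - (\<sigma> * lamj j)^2/8))" for j \<omega>
  have Zj_eq: "Zj j \<omega> = exp (\<sigma> * lamj j * Dw \<omega> - (lamj j)^2 * nw \<omega> / 8)" for j \<omega>
  proof -
    have S: "{s\<in>window \<tau> t. s < t \<and> \<phi> \<omega> s = k} = Pw \<omega>" by (auto simp: Pw_def window_def)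
    have "(\<sigma> * lamj j)^2 = (lamj j)^2" using sig by (simp add: power_mult_distrib)
    then show ?thesis unfolding Zj_def S Dw_def nw_card
      by (simp add: sum_subtractf sum_distrib_left right_diff_distrib mult_ac)
  qed
  have Zint: "integrable M (Zj j) \<and> integral\<^sup>L M (Zj j) \<le> 1" for j
    using core[OF P meas indep subg k, where t=t and V=V and \<eta>=\<eta> and lam="\<sigma> * lamj j" and u=t] t
    unfolding Zj_def \<phi>_def \<tau>_def by simp
  define Sj where "Sj j = {\<omega>\<in>space M. exp (\<kappa> * Ej j) \<le> Zj j \<omega>}" for j
  have Zpos: "Zj j \<omega> \<ge> 0" for j \<omega> by (simp add: Zj_def)
  have Zm[measurable]: "Zj j \<in> borel_measurable M" for j
    using Zint[of j] by (simp add: borel_measurable_integrable)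
  have Sj_sets: "Sj j \<in> sets M" for j
    unfolding Sj_def by measurable
  have Sj_meas: "measure M (Sj j) \<le> exp (-(\<kappa> * Ej j))" for j
  proof -
    have "measure M (Sj j) \<le> integral\<^sup>L M (Zj j) / exp (\<kappa> * Ej j)"
      unfolding Sj_def using Zint[of j]
      by (intro integral_Markov_inequality_measure[where A="space M"]) (auto simp: Zpos)
    also have "\<dots> \<le> 1 / exp (\<kappa> * Ej j)" using Zint[of j] by (intro divide_right_mono) auto
    finally show ?thesis by (simp add: exp_minus inverse_eq_divide)
  qed
  have cover: "Ev \<subseteq> (\<Union>j<J. Sj j)"
  proof
    fix \<omega> assume w: "\<omega> \<in> Ev"
    have lw: "l \<le> real (nw \<omega>)" and Dw: "\<sigma> * Dw \<omega> \<ge> real (nw \<omega>) * (x + conf \<eta> \<tau> K (nw \<omega>))"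
      using Eprop[OF w] by (simp_all add: nw_def Dw_def Pw_def \<phi>_def \<tau>_def)
    have "real (nw \<omega>) \<le> real \<tau>" by (simp add: nw_def pulls_le)
    then have "real (nw \<omega>) < l * \<rho>^J" using tauJ by linarith
    then obtain j where j: "j < J" "l * \<rho>^j \<le> real (nw \<omega>)" "real (nw \<omega>) < \<rho> * (l * \<rho>^j)"
      using bucket_exists[OF rho1 l0 lw] by blast
    have Lp: "Lj j > 0" using l0 z1 by (simp add: Lj_def)
    have key: "(8 * sqrt (Ej j)/(sqrt (Lj j) * (1+z))) * (\<sigma> * Dw \<omega>) - (8 * sqrt (Ej j)/(sqrt (Lj j) * (1+z)))^2 * real (nw \<omega>)/8
               \<ge> (8 * z/(1+z)^2) * (Ej j)"
      unfolding Ej_def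
      by (rule expo) (use tau1 K1 x eta z1 Lp j Dw in \<open>auto simp: Lj_def \<rho>_def conf_def\<close>)
    have "exp (\<kappa> * Ej j) \<le> Zj j \<omega>"
      unfolding Zj_eq using key by (simp add: \<kappa>_def lamj_def mult_ac)
    then have "\<omega> \<in> Sj j" using w Esub by (auto simp: Sj_def)
    then show "\<omega> \<in> (\<Union>j<J. Sj j)" using j by auto
  qed
  have "measure M Ev \<le> measure M (\<Union>j<J. Sj j)"
    using cover Sj_sets by (intro finite_measure_mono) auto
  also have "\<dots> \<le> (\<Sum>j<J. measure M (Sj j))"
    using Sj_sets by (intro measure_UNION_le) auto
  also have "\<dots> \<le> (\<Sum>j<J. exp (-(\<kappa> * Ej j)))"
    by (intro sum_mono Sj_meas)
  also have "\<dots> \<le> C * (real K/(real \<tau> * x^2)) * exp (-(x^2 * l/\<eta>))"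
    unfolding \<kappa>_def Ej_def Lj_def
    by (rule sum_bound) (use tau1 K1 x eta l0 z1 ke C0 h1 h2 in auto)
  finally show ?thesis by (simp add: C_def \<tau>_def)
qed



lemma emp_win:
  assumes "pulls \<phi> \<tau> k t > 0"
  shows "emp_mean \<phi> Xr \<tau> k t - win_mean \<phi> \<mu>' \<tau> k t
       = (\<Sum>s\<in>{s\<in>window \<tau> t. \<phi> s = k}. (Xr s k - \<mu>' s k)) / real (pulls \<phi> \<tau> k t)"
  by (simp add: emp_mean_def win_mean_def sum_subtractf diff_divide_distrib)

theorem lemma3:
  fixes M :: "'a measure" and X :: "nat \<Rightarrow> nat \<Rightarrow> 'a \<Rightarrow> real" and \<mu> :: "nat \<Rightarrow> nat \<Rightarrow> real"
    and K T k t :: nat and V \<eta> a b x l :: real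
  assumes "prob_space M"
    and meas: "\<forall>s\<in>{1..T}. \<forall>j\<in>{1..K}. X s j \<in> borel_measurable M"
    and indep: "prob_space.indep_vars M (\<lambda>_. borel) (\<lambda>(s, j). X s j) ({1..T} \<times> {1..K})"
    and int: "\<forall>s\<in>{1..T}. \<forall>j\<in>{1..K}. integrable M (X s j)"
    and mean: "\<forall>s\<in>{1..T}. \<forall>j\<in>{1..K}. (\<integral>\<omega>. X s j \<omega> \<partial>M) = \<mu> s j"
    and subg: "\<forall>s\<in>{1..T}. \<forall>j\<in>{1..K}. \<forall>r::real.
                 integrable M (\<lambda>\<omega>. exp (r * (X s j \<omega> - \<mu> s j))) \<and>
                 (\<integral>\<omega>. exp (r * (X s j \<omega> - \<mu> s j)) \<partial>M) \<le> exp (r\<^sup>2 / 8)"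
    and "b > 0"
    and range: "\<forall>s\<in>{1..T}. \<forall>j\<in>{1..K}. \<mu> s j \<in> {a..a + b}"
    and "V > 0"
    and "\<eta> > 1/2"
    and "k \<in> {1..K}" and "t \<in> {1..T}" and "x > 0" and "l \<ge> 1"
  shows "measure M {\<omega> \<in> space M.
            let Xr = (\<lambda>s j. X s j \<omega>); \<tau> = swmoss_tau K T V; \<phi> = swmoss K T V \<eta> Xr;
                n = pulls \<phi> \<tau> k t
            in emp_mean \<phi> Xr \<tau> k t + conf \<eta> \<tau> K n \<le> win_mean \<phi> \<mu> \<tau> k t - x \<and> real n \<ge> l}
         \<le> (2 * \<eta>) powr (3/2) / ln (2 * \<eta>) * (real K / (real (swmoss_tau K T V) * x\<^sup>2))
             * exp (- (x\<^sup>2 * l / \<eta>))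
       \<and> measure M {\<omega> \<in> space M.
            let Xr = (\<lambda>s j. X s j \<omega>); \<tau> = swmoss_tau K T V; \<phi> = swmoss K T V \<eta> Xr;
                n = pulls \<phi> \<tau> k t
            in emp_mean \<phi> Xr \<tau> k t - conf \<eta> \<tau> K n \<ge> win_mean \<phi> \<mu> \<tau> k t + x \<and> real n \<ge> l}
         \<le> (2 * \<eta>) powr (3/2) / ln (2 * \<eta>) * (real K / (real (swmoss_tau K T V) * x\<^sup>2))
             * exp (- (x\<^sup>2 * l / \<eta>))"
proof (rule conjI)
  note G = main_gen[OF assms(1) meas indep subg assms(9) assms(10) assms(11) assms(12) assms(13) assms(14)]
  show "measure M {\<omega> \<in> space M.
            let Xr = (\<lambda>s j. X s j \<omega>); \<tau> = swmoss_tau K T V; \<phi> = swmoss K T V \<eta> Xr;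
                n = pulls \<phi> \<tau> k t
            in emp_mean \<phi> Xr \<tau> k t + conf \<eta> \<tau> K n \<le> win_mean \<phi> \<mu> \<tau> k t - x \<and> real n \<ge> l}
         \<le> (2 * \<eta>) powr (3/2) / ln (2 * \<eta>) * (real K / (real (swmoss_tau K T V) * x\<^sup>2))
             * exp (- (x\<^sup>2 * l / \<eta>))"
  proof (rule G[where \<sigma>="-1"])
    fix \<omega>
    assume w: "\<omega> \<in> {\<omega> \<in> space M.
            let Xr = (\<lambda>s j. X s j \<omega>); \<tau> = swmoss_tau K T V; \<phi> = swmoss K T V \<eta> Xr;
                n = pulls \<phi> \<tau> k t
            in emp_mean \<phi> Xr \<tau> k t + conf \<eta> \<tau> K n \<le> win_mean \<phi> \<mu> \<tau> k t - x \<and> real n \<ge> l}"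
    define \<tau> where "\<tau> = swmoss_tau K T V"
    define \<phi> where "\<phi> = swmoss K T V \<eta> (\<lambda>s j. X s j \<omega>)"
    define n where "n = pulls \<phi> \<tau> k t"
    define D where "D = (\<Sum>s\<in>{s\<in>window \<tau> t. \<phi> s = k}. (X s k \<omega> - \<mu> s k))"
    have h: "emp_mean \<phi> (\<lambda>s j. X s j \<omega>) \<tau> k t + conf \<eta> \<tau> K n \<le> win_mean \<phi> \<mu> \<tau> k t - x" "real n \<ge> l"
      using w by (simp_all add: Let_def \<tau>_def \<phi>_def n_def)
    have n0: "n > 0" using h(2) assms(14) by simp
    have "emp_mean \<phi> (\<lambda>s j. X s j \<omega>) \<tau> k t - win_mean \<phi> \<mu> \<tau> k t = D / real n"
      using emp_win[of \<phi> \<tau> k t "\<lambda>s j. X s j \<omega>" \<mu>] n0 by (simp add: D_def n_def)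
    then have "D / real n \<le> -(x + conf \<eta> \<tau> K n)" using h(1) by linarith
    then have "D \<le> real n * (-(x + conf \<eta> \<tau> K n))" using n0 by (simp add: divide_le_eq mult.commute)
    then have "-1 * D \<ge> real n * (x + conf \<eta> \<tau> K n)" by (simp add: algebra_simps)
    then show "real (pulls (swmoss K T V \<eta> (\<lambda>s j. X s j \<omega>)) (swmoss_tau K T V) k t) \<ge> l \<and>
        -1 * (\<Sum>s\<in>{s\<in>window (swmoss_tau K T V) t. swmoss K T V \<eta> (\<lambda>s j. X s j \<omega>) s = k}. (X s k \<omega> - \<mu> s k))
        \<ge> real (pulls (swmoss K T V \<eta> (\<lambda>s j. X s j \<omega>)) (swmoss_tau K T V) k t)
           * (x + conf \<eta> (swmoss_tau K T V) K (pulls (swmoss K T V \<eta> (\<lambda>s j. X s j \<omega>)) (swmoss_tau K T V) k t))"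
      using h(2) by (simp add: D_def n_def \<phi>_def \<tau>_def)
  qed auto
  show "measure M {\<omega> \<in> space M.
            let Xr = (\<lambda>s j. X s j \<omega>); \<tau> = swmoss_tau K T V; \<phi> = swmoss K T V \<eta> Xr;
                n = pulls \<phi> \<tau> k t
            in emp_mean \<phi> Xr \<tau> k t - conf \<eta> \<tau> K n \<ge> win_mean \<phi> \<mu> \<tau> k t + x \<and> real n \<ge> l}
         \<le> (2 * \<eta>) powr (3/2) / ln (2 * \<eta>) * (real K / (real (swmoss_tau K T V) * x\<^sup>2))
             * exp (- (x\<^sup>2 * l / \<eta>))"
  proof (rule G[where \<sigma>="1"])
    fix \<omega>
    assume w: "\<omega> \<in> {\<omega> \<in> space M.
            let Xr = (\<lambda>s j. X s j \<omega>); \<tau> = swmoss_tau K T V; \<phi> = swmoss K T V \<eta> Xr;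
                n = pulls \<phi> \<tau> k t
            in emp_mean \<phi> Xr \<tau> k t - conf \<eta> \<tau> K n \<ge> win_mean \<phi> \<mu> \<tau> k t + x \<and> real n \<ge> l}"
    define \<tau> where "\<tau> = swmoss_tau K T V"
    define \<phi> where "\<phi> = swmoss K T V \<eta> (\<lambda>s j. X s j \<omega>)"
    define n where "n = pulls \<phi> \<tau> k t"
    define D where "D = (\<Sum>s\<in>{s\<in>window \<tau> t. \<phi> s = k}. (X s k \<omega> - \<mu> s k))"
    have h: "emp_mean \<phi> (\<lambda>s j. X s j \<omega>) \<tau> k t - conf \<eta> \<tau> K n \<ge> win_mean \<phi> \<mu> \<tau> k t + x" "real n \<ge> l"
      using w by (simp_all add: Let_def \<tau>_def \<phi>_def n_def)
    have n0: "n > 0" using h(2) assms(14) by simp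
    have "emp_mean \<phi> (\<lambda>s j. X s j \<omega>) \<tau> k t - win_mean \<phi> \<mu> \<tau> k t = D / real n"
      using emp_win[of \<phi> \<tau> k t "\<lambda>s j. X s j \<omega>" \<mu>] n0 by (simp add: D_def n_def)
    then have "D / real n \<ge> x + conf \<eta> \<tau> K n" using h(1) by linarith
    then have "D \<ge> real n * (x + conf \<eta> \<tau> K n)" using n0 by (simp add: le_divide_eq mult.commute)
    then show "real (pulls (swmoss K T V \<eta> (\<lambda>s j. X s j \<omega>)) (swmoss_tau K T V) k t) \<ge> l \<and>
        1 * (\<Sum>s\<in>{s\<in>window (swmoss_tau K T V) t. swmoss K T V \<eta> (\<lambda>s j. X s j \<omega>) s = k}. (X s k \<omega> - \<mu> s k))
        \<ge> real (pulls (swmoss K T V \<eta> (\<lambda>s j. X s j \<omega>)) (swmoss_tau K T V) k t)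
           * (x + conf \<eta> (swmoss_tau K T V) K (pulls (swmoss K T V \<eta> (\<lambda>s j. X s j \<omega>)) (swmoss_tau K T V) k t))"
      using h(2) by (simp add: D_def n_def \<phi>_def \<tau>_def)
  qed auto
qed


end
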